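(* Let $X,Y$ be arbitrary Archimedean vector lattices and let $T:X\to Y$ be a d-isomorphism. Then $T^{-1}$ satisfies condition $(\beta)$.
   Context: All vector lattices are Archimedean. For a subset $A$ of a vector lattice $X$, $A^d=\{x\in X: |x|\wedge|a|=0 \text{ for all } a\in A\}$ and $A^{dd}=(A^d)^d$. For $a,b\in X$ we write $a\lhd b$ if $\{a\}^{dd}\subseteq\{b\}^{dd}$. A linear operator $S$ satisfies condition $(\beta)$ if $Sa\lhd Sb$ whenever $a\lhd b$. A linear operator is disjointness preserving if it maps disjoint elements to disjoint elements. A linear bijection $T:X\to Y$ is a d-isomorphism if both $T$ and $T^{-1}$ are disjointness preserving. *)

theory Defs
  imports "HOL-Analysis.Analysis"
begin

definition vabs :: "'a::{ordered_real_vector,lattice} \<Rightarrow> 'a" where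
  "vabs x = sup x (- x)"

definition archimedean_vl :: "'a::{ordered_real_vector,lattice} itself \<Rightarrow> bool" where
  "archimedean_vl _ \<longleftrightarrow>
     (\<forall>x y::'a. 0 \<le> x \<longrightarrow> (\<forall>n::nat. real n *\<^sub>R x \<le> y) \<longrightarrow> x = 0)"

definition disjoint_compl :: "'a::{ordered_real_vector,lattice} set \<Rightarrow> 'a set" where
  "disjoint_compl A = {x. \<forall>a\<in>A. inf (vabs x) (vabs a) = 0}"

definition band_below :: "'a::{ordered_real_vector,lattice} \<Rightarrow> 'a \<Rightarrow> bool" where
  "band_below a b \<longleftrightarrow> disjoint_compl (disjoint_compl {a}) \<subseteq> disjoint_compl (disjoint_compl {b})"

definition cond_beta ::
  "('a::{ordered_real_vector,lattice} \<Rightarrow> 'b::{ordered_real_vector,lattice}) \<Rightarrow> bool" where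
  "cond_beta S \<longleftrightarrow> (\<forall>a b. band_below a b \<longrightarrow> band_below (S a) (S b))"

definition disj_preserving ::
  "('a::{ordered_real_vector,lattice} \<Rightarrow> 'b::{ordered_real_vector,lattice}) \<Rightarrow> bool" where
  "disj_preserving S \<longleftrightarrow>
     (\<forall>x y. inf (vabs x) (vabs y) = 0 \<longrightarrow> inf (vabs (S x)) (vabs (S y)) = 0)"

definition d_isomorphism ::
  "('a::{ordered_real_vector,lattice} \<Rightarrow> 'b::{ordered_real_vector,lattice}) \<Rightarrow> bool" where
  "d_isomorphism T \<longleftrightarrow> linear T \<and> bij T \<and> disj_preserving T \<and> disj_preserving (inv T)"

end

theory Submission
  imports Defs
begin

lemma dc_sym: "x \<in> disjoint_compl {a} \<longleftrightarrow> a \<in> disjoint_compl {x}"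
  by (simp add: disjoint_compl_def inf_commute)

lemma dc_anti: "A \<subseteq> B \<Longrightarrow> disjoint_compl B \<subseteq> disjoint_compl A"
  unfolding disjoint_compl_def by blast

lemma dc_sub_dd: "A \<subseteq> disjoint_compl (disjoint_compl A)"
  unfolding disjoint_compl_def by (auto simp: inf_commute)

lemma dc_triple: "disjoint_compl (disjoint_compl (disjoint_compl A)) = disjoint_compl A"
  by (meson dc_anti dc_sub_dd subset_antisym)

lemma band_below_iff: "band_below a b \<longleftrightarrow> disjoint_compl {b} \<subseteq> disjoint_compl {a}"
proof
  assume "band_below a b"
  then have "disjoint_compl (disjoint_compl (disjoint_compl {b}))
     \<subseteq> disjoint_compl (disjoint_compl (disjoint_compl {a}))"
    unfolding band_below_def by (rule dc_anti)
  then show "disjoint_compl {b} \<subseteq> disjoint_compl {a}" by (simp add: dc_triple)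
next
  assume "disjoint_compl {b} \<subseteq> disjoint_compl {a}"
  then show "band_below a b" unfolding band_below_def by (rule dc_anti)
qed

theorem proposition3p3:
  fixes T :: "'a::{ordered_real_vector,lattice} \<Rightarrow> 'b::{ordered_real_vector,lattice}"
  assumes "archimedean_vl TYPE('a)" and "archimedean_vl TYPE('b)"
    and "d_isomorphism T"
  shows "cond_beta (inv T)"
proof -
  have bij: "bij T" and dT: "disj_preserving T" and dI: "disj_preserving (inv T)"
    using assms(3) by (auto simp: d_isomorphism_def)
  have TI: "T (inv T y) = y" for y using bij by (simp add: bij_is_surj surj_f_inv_f)
  have IT: "inv T (T x) = x" for x using bij by (simp add: bij_is_inj)
  show ?thesis unfolding cond_beta_def
  proof (intro allI impI)
    fix a b :: 'b
    assume "band_below a b"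
    then have ab: "disjoint_compl {b} \<subseteq> disjoint_compl {a}" by (simp add: band_below_iff)
    show "band_below (inv T a) (inv T b)" unfolding band_below_iff
    proof
      fix x assume "x \<in> disjoint_compl {inv T b}"
      then have "inf (vabs x) (vabs (inv T b)) = 0" by (simp add: disjoint_compl_def)
      then have "inf (vabs (T x)) (vabs (T (inv T b))) = 0"
        using dT by (simp add: disj_preserving_def)
      then have "T x \<in> disjoint_compl {b}" by (simp add: TI disjoint_compl_def)
      then have "T x \<in> disjoint_compl {a}" using ab by blast
      then have "inf (vabs (T x)) (vabs a) = 0" by (simp add: disjoint_compl_def)
      then have "inf (vabs (inv T (T x))) (vabs (inv T a)) = 0"
        using dI by (simp add: disj_preserving_def)
      then show "x \<in> disjoint_compl {inv T a}" by (simp add: IT disjoint_compl_def)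
    qed
  qed
qed

end
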